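(* Let $(X,\mathcal{A})$ be a $(v,k,\lambda)$-BIBD. Then there exists a harmonious colouring of the Levi graph $\mathcal{L}(X,\mathcal{A})$ using $w$ colours if and only if there is a strong nesting $\phi:\mathcal{A}\to Y$ of $(X,\mathcal{A})$ with $X\subseteq Y$ and $|Y|=w$.
   Context: A $(v,k,\lambda)$-BIBD is a pair $(X,\mathcal{A})$ where $X$ is a set of $v$ points and $\mathcal{A}$ is a multiset of $k$-subsets of $X$ (blocks) such that every pair of distinct points lies in exactly $\lambda$ blocks. Given such $(X,\mathcal{A})$ and a set $Y\supseteq X$ with $|Y|=w$, a map $\phi:\mathcal{A}\to Y$ is a strong nesting if (1) $\phi(A)\notin A$ for every block $A\in\mathcal{A}$, and (2) the multiset of pairs $\{\{x,\phi(A)\}: A\in\mathcal{A},\ x\in A\}$ consists of distinct pairs. The Levi graph $\mathcal{L}(X,\mathcal{A})$ is the bipartite graph with vertex set $X\cup\mathcal{A}$ (each block of the multiset a separate vertex) and an edge $\{x,A\}$ whenever $x\in A$. A harmonious colouring of a graph is a map $c$ from its vertices to a set of colours such that adjacent vertices receive different colours and no two distinct edges $\{u,u'\}$, $\{z,z'\}$ satisfy $\{c(u),c(u')\}=\{c(z),c(z')\}$. *)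

theory Defs
  imports Main "HOL-Library.Infinite_Typeclass"
begin

text \<open>The multiset of blocks is represented by a
finite index set B of block labels together with blk :: 'b => 'a set; distinct labels
may carry equal blocks (repeated blocks of the multiset).\<close>
definition bibd :: "'a set \<Rightarrow> 'b set \<Rightarrow> ('b \<Rightarrow> 'a set) \<Rightarrow> nat \<Rightarrow> nat \<Rightarrow> nat \<Rightarrow> bool" where
  "bibd X B blk v k lam \<longleftrightarrow>
     finite X \<and> card X = v \<and> finite B \<and>
     2 \<le> k \<and> k < v \<and> 1 \<le> lam \<and>
     (\<forall>A\<in>B. blk A \<subseteq> X \<and> card (blk A) = k) \<and>
     (\<forall>x\<in>X. \<forall>y\<in>X. x \<noteq> y \<longrightarrow> card {A\<in>B. x \<in> blk A \<and> y \<in> blk A} = lam)"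

definition strong_nesting :: "'a set \<Rightarrow> 'b set \<Rightarrow> ('b \<Rightarrow> 'a set) \<Rightarrow> 'a set \<Rightarrow> ('b \<Rightarrow> 'a) \<Rightarrow> bool" where
  "strong_nesting X B blk Y phi \<longleftrightarrow>
     (\<forall>A\<in>B. phi A \<in> Y \<and> phi A \<notin> blk A) \<and>
     inj_on (\<lambda>(A, x). {x, phi A}) {(A, x). A \<in> B \<and> x \<in> blk A}"

text \<open>Levi graph: vertices Inl x (points) and Inr A (block labels).\<close>
definition levi_vertices :: "'a set \<Rightarrow> 'b set \<Rightarrow> ('a + 'b) set" where
  "levi_vertices X B = Inl ` X \<union> Inr ` B"

definition levi_edges :: "'a set \<Rightarrow> 'b set \<Rightarrow> ('b \<Rightarrow> 'a set) \<Rightarrow> ('a + 'b) set set" where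
  "levi_edges X B blk = {{Inl x, Inr A} | x A. A \<in> B \<and> x \<in> blk A}"

text \<open>Harmonious colouring of graph (V,E) (edges are 2-element sets) with colours from C.\<close>
definition harmonious_colouring :: "'v set \<Rightarrow> 'v set set \<Rightarrow> ('v \<Rightarrow> 'c) \<Rightarrow> 'c set \<Rightarrow> bool" where
  "harmonious_colouring V E c C \<longleftrightarrow>
     c ` V \<subseteq> C \<and>
     (\<forall>e\<in>E. \<forall>u\<in>e. \<forall>z\<in>e. u \<noteq> z \<longrightarrow> c u \<noteq> c z) \<and>
     (\<forall>e\<in>E. \<forall>e'\<in>E. e \<noteq> e' \<longrightarrow> c ` e \<noteq> c ` e')"

end

theory Submission
  imports Defs
begin

lemma fwd:
  fixes X :: "'a::infinite set" and B :: "'b set" and blk :: "'b \<Rightarrow> 'a set"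
    and C :: "nat set" and c
  assumes bd: "bibd X B blk v k lam" and fC: "finite C" and cw: "card C = w"
    and h: "harmonious_colouring (levi_vertices X B) (levi_edges X B blk) c C"
  shows "\<exists>Y phi. X \<subseteq> Y \<and> finite Y \<and> card Y = w \<and> strong_nesting X B blk Y phi"
proof -
  have fX: "finite X" and lam: "1 \<le> lam" and sub: "\<And>A. A \<in> B \<Longrightarrow> blk A \<subseteq> X"
    and fB: "finite B"
    and pairs: "\<And>x y. x \<in> X \<Longrightarrow> y \<in> X \<Longrightarrow> x \<noteq> y \<Longrightarrow> card {A\<in>B. x \<in> blk A \<and> y \<in> blk A} = lam"
    using bd unfolding bibd_def by auto
  have img: "c ` (Inl ` X \<union> Inr ` B) \<subseteq> C"
   and H1': "\<forall>e\<in>levi_edges X B blk. \<forall>u\<in>e. \<forall>z\<in>e. u \<noteq> z \<longrightarrow> c u \<noteq> c z"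
   and H2': "\<forall>e\<in>levi_edges X B blk. \<forall>e'\<in>levi_edges X B blk. e \<noteq> e' \<longrightarrow> c ` e \<noteq> c ` e'"
    using h unfolding harmonious_colouring_def levi_vertices_def by auto
  have edge: "\<And>x A. A \<in> B \<Longrightarrow> x \<in> blk A \<Longrightarrow> {Inl x, Inr A} \<in> levi_edges X B blk"
    unfolding levi_edges_def by blast
  have H1: "\<And>x A. A \<in> B \<Longrightarrow> x \<in> blk A \<Longrightarrow> c (Inl x) \<noteq> c (Inr A)"
  proof -
    fix x A assume "A \<in> B" "x \<in> blk A"
    from H1'[rule_format, OF edge[OF this]] show "c (Inl x) \<noteq> c (Inr A)" by auto
  qed
  have H2: "\<And>x A x' A'. A \<in> B \<Longrightarrow> x \<in> blk A \<Longrightarrow> A' \<in> B \<Longrightarrow> x' \<in> blk A' \<Longrightarrow>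
      {c (Inl x), c (Inr A)} = {c (Inl x'), c (Inr A')} \<Longrightarrow> x = x' \<and> A = A'"
  proof -
    fix x A x' A' assume a: "A \<in> B" "x \<in> blk A" "A' \<in> B" "x' \<in> blk A'"
      "{c (Inl x), c (Inr A)} = {c (Inl x'), c (Inr A')}"
    have "{Inl x, Inr A} = ({Inl x', Inr A'} :: ('a+'b) set)"
      using H2'[rule_format, OF edge[OF a(1,2)] edge[OF a(3,4)]] a(5) by auto
    then show "x = x' \<and> A = A'" by (auto simp: doubleton_eq_iff)
  qed
  have injX: "inj_on (\<lambda>x. c (Inl x)) X"
  proof (rule inj_onI, rule ccontr)
    fix x y assume xy: "x \<in> X" "y \<in> X" "c (Inl x) = c (Inl y)" "x \<noteq> y"
    have "0 < card {A\<in>B. x \<in> blk A \<and> y \<in> blk A}" using pairs[OF xy(1,2,4)] lam by simp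
    then have "{A\<in>B. x \<in> blk A \<and> y \<in> blk A} \<noteq> {}"
      by (rule card_gt_0_iff[THEN iffD1, THEN conjunct1])
    then obtain A where A: "A \<in> B" "x \<in> blk A" "y \<in> blk A"
      by blast
    have "x = y" using H2[OF A(1,2) A(1,3)] xy(3) by simp
    then show False using xy(4) by simp
  qed
  define P where "P = (\<lambda>x. c (Inl x)) ` X"
  have PC: "P \<subseteq> C" using img P_def by auto
  define D where "D = C - P"
  have fD: "finite D" using fC D_def by auto
  have "infinite (UNIV - X :: 'a set)" using fX by (simp add: infinite_UNIV)
  then obtain F where F: "F \<subseteq> UNIV - X" "finite F" "card F = card D"
    using infinite_arbitrarily_large by blast
  obtain f where f: "bij_betw f F D"
    using bij_betw_iff_card[OF F(2) fD] F(3) by blast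
  define g where "g = (\<lambda>y. if y \<in> X then c (Inl y) else f y)"
  define Y where "Y = X \<union> F"
  have bg: "bij_betw g Y C"
  proof -
    have b1: "bij_betw g X P" using injX unfolding P_def g_def bij_betw_def inj_on_def by auto
    have b2: "bij_betw g F D"
    proof -
      have "\<forall>y\<in>F. g y = f y" using F(1) g_def by auto
      then have "bij_betw g F D = bij_betw f F D" by (intro bij_betw_cong) simp
      then show ?thesis using f by simp
    qed
    have "P \<inter> D = {}" using D_def by auto
    then have "bij_betw g (X \<union> F) (P \<union> D)"
      using bij_betw_combine[OF b1 b2] by simp
    moreover have "P \<union> D = C" using PC D_def by auto
    ultimately show ?thesis using Y_def by simp
  qed
  define phi where "phi = (\<lambda>A. inv_into Y g (c (Inr A)))"
  have gX: "\<And>x. x \<in> X \<Longrightarrow> g x = c (Inl x)" using g_def by simp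
  have cB: "\<And>A. A \<in> B \<Longrightarrow> c (Inr A) \<in> C" using img by auto
  have phiY: "\<And>A. A \<in> B \<Longrightarrow> phi A \<in> Y \<and> g (phi A) = c (Inr A)"
  proof -
    fix A assume A: "A \<in> B"
    have "c (Inr A) \<in> g ` Y" using bg cB[OF A] unfolding bij_betw_def by simp
    then show "phi A \<in> Y \<and> g (phi A) = c (Inr A)"
      unfolding phi_def by (simp add: inv_into_into f_inv_into_f)
  qed
  have "strong_nesting X B blk Y phi"
    unfolding strong_nesting_def
  proof (intro conjI ballI inj_onI)
    fix A assume A: "A \<in> B"
    show "phi A \<in> Y" using phiY[OF A] by simp
    show "phi A \<notin> blk A"
    proof
      assume "phi A \<in> blk A"
      then have "g (phi A) = c (Inl (phi A))" using gX sub[OF A] by auto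
      with phiY[OF A] H1[OF A \<open>phi A \<in> blk A\<close>] show False by simp
    qed
  next
    fix p q assume p: "p \<in> {(A, x). A \<in> B \<and> x \<in> blk A}" and q: "q \<in> {(A, x). A \<in> B \<and> x \<in> blk A}"
      and eq: "(\<lambda>(A, x). {x, phi A}) p = (\<lambda>(A, x). {x, phi A}) q"
    obtain A x where pA: "p = (A, x)" "A \<in> B" "x \<in> blk A" using p by auto
    obtain A' x' where qA: "q = (A', x')" "A' \<in> B" "x' \<in> blk A'" using q by auto
    have e: "{x, phi A} = {x', phi A'}" using eq pA qA by simp
    have "g ` {x, phi A} = g ` {x', phi A'}" using e by simp
    moreover have "g x = c (Inl x)" "g x' = c (Inl x')" using gX sub pA qA by auto
    moreover have "g (phi A) = c (Inr A)" "g (phi A') = c (Inr A')" using phiY pA qA by auto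
    ultimately have "{c (Inl x), c (Inr A)} = {c (Inl x'), c (Inr A')}"
      by simp
    from H2[OF pA(2,3) qA(2,3) this] show "p = q" using pA qA by simp
  qed
  moreover have "finite Y" using Y_def fX F by simp
  moreover have "card Y = w" using bij_betw_same_card[OF bg] cw by simp
  moreover have "X \<subseteq> Y" using Y_def by simp
  ultimately show ?thesis by (intro exI[of _ Y] exI[of _ phi]) simp
qed

lemma bwd:
  fixes X :: "'a set" and B :: "'b set" and blk :: "'b \<Rightarrow> 'a set"
  assumes "X \<subseteq> Y" "finite Y" "card Y = w" and sn: "strong_nesting X B blk Y phi"
    and sub: "\<And>A. A \<in> B \<Longrightarrow> blk A \<subseteq> X"
  shows "\<exists>(C :: nat set) c. finite C \<and> card C = w \<and>
            harmonious_colouring (levi_vertices X B) (levi_edges X B blk) c C"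
proof -
  obtain g where g: "bij_betw g Y {0..<w}"
    using assms(2,3) by (metis ex_bij_betw_finite_nat)
  have inj: "inj_on g Y" and gY: "g ` Y = {0..<w}" using g unfolding bij_betw_def by auto
  have phi: "\<And>A. A \<in> B \<Longrightarrow> phi A \<in> Y \<and> phi A \<notin> blk A"
   and ij: "inj_on (\<lambda>(A, x). {x, phi A}) {(A, x). A \<in> B \<and> x \<in> blk A}"
    using sn unfolding strong_nesting_def by auto
  define c where "c = (\<lambda>u. case u of Inl x \<Rightarrow> g x | Inr A \<Rightarrow> g (phi A))"
  have "harmonious_colouring (levi_vertices X B) (levi_edges X B blk) c {0..<w}"
    unfolding harmonious_colouring_def
  proof (intro conjI ballI impI)
    show "c ` levi_vertices X B \<subseteq> {0..<w}"
    proof -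
      have gl: "\<And>y. y \<in> Y \<Longrightarrow> g y < w" using gY by auto
      show ?thesis unfolding levi_vertices_def c_def using gl assms(1) phi by auto
    qed
  next
    fix e u z assume e: "e \<in> levi_edges X B blk" and u: "u \<in> e" and z: "z \<in> e" and uz: "u \<noteq> z"
    obtain x A where xA: "e = {Inl x, Inr A}" "A \<in> B" "x \<in> blk A"
      using e unfolding levi_edges_def by auto
    have "g x \<noteq> g (phi A)"
    proof
      assume "g x = g (phi A)"
      moreover have "x \<in> Y" using xA sub assms(1) by blast
      ultimately have "x = phi A" using inj phi[OF xA(2)] by (meson inj_onD)
      with phi[OF xA(2)] xA(3) show False by simp
    qed
    then show "c u \<noteq> c z" using u z uz xA unfolding c_def by auto
  next
    fix e e' assume e: "e \<in> levi_edges X B blk" and e': "e' \<in> levi_edges X B blk" and ne: "e \<noteq> e'"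
    obtain x A where xA: "e = {Inl x, Inr A}" "A \<in> B" "x \<in> blk A"
      using e unfolding levi_edges_def by auto
    obtain x' A' where xA': "e' = {Inl x', Inr A'}" "A' \<in> B" "x' \<in> blk A'"
      using e' unfolding levi_edges_def by auto
    show "c ` e \<noteq> c ` e'"
    proof
      assume "c ` e = c ` e'"
      then have "g ` {x, phi A} = g ` {x', phi A'}" using xA xA' unfolding c_def by auto
      moreover have "{x, phi A} \<subseteq> Y" "{x', phi A'} \<subseteq> Y"
        using phi xA xA' assms(1) sub by blast+
      ultimately have "{x, phi A} = {x', phi A'}" using inj_on_image_eq_iff[OF inj] by blast
      then have "(\<lambda>(A, x). {x, phi A}) (A, x) = (\<lambda>(A, x). {x, phi A}) (A', x')" by simp
      from inj_onD[OF ij this] have "(A, x) = (A', x')" using xA xA' by simp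
      then show False using ne xA xA' by simp
    qed
  qed
  then show ?thesis by (intro exI[of _ "{0..<w}"] exI[of _ c]) simp
qed

theorem theorem5p1:
  fixes X :: "'a::infinite set" and B :: "'b set" and blk :: "'b \<Rightarrow> 'a set"
    and v k lam w :: nat
  assumes "bibd X B blk v k lam"
  shows "(\<exists>(C :: nat set) c. finite C \<and> card C = w \<and>
            harmonious_colouring (levi_vertices X B) (levi_edges X B blk) c C)
         \<longleftrightarrow> (\<exists>Y phi. X \<subseteq> Y \<and> finite Y \<and> card Y = w \<and> strong_nesting X B blk Y phi)"
proof
  assume "\<exists>(C :: nat set) c. finite C \<and> card C = w \<and>
            harmonious_colouring (levi_vertices X B) (levi_edges X B blk) c C"
  then show "\<exists>Y phi. X \<subseteq> Y \<and> finite Y \<and> card Y = w \<and> strong_nesting X B blk Y phi"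
    using fwd[OF assms] by blast
next
  have sub: "\<And>A. A \<in> B \<Longrightarrow> blk A \<subseteq> X" using assms unfolding bibd_def by auto
  assume "\<exists>Y phi. X \<subseteq> Y \<and> finite Y \<and> card Y = w \<and> strong_nesting X B blk Y phi"
  then obtain Y phi where "X \<subseteq> Y" "finite Y" "card Y = w" "strong_nesting X B blk Y phi" by blast
  from bwd[OF this sub] show "\<exists>(C :: nat set) c. finite C \<and> card C = w \<and>
            harmonious_colouring (levi_vertices X B) (levi_edges X B blk) c C" by blast
qed

end
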